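(* Let $d\ge 2$ and $r,t$ be positive integers, let $\mathcal{S}$ be a finite collection of spheres in $\mathbb{R}^d$, and let $\mathcal{N}\subseteq\mathcal{S}$ be a nested set of exactly $t(r+1)$ spheres. Suppose that the intersection graph $G(\mathcal{S}\setminus\mathcal{N})$ contains a collection $\mathcal{P}$ of $t^2(r+1)$ pairwise vertex-disjoint paths such that for each $P\in\mathcal{P}$: one end vertex of $P$ intersects the minimal sphere of $\mathcal{N}$, the other end vertex of $P$ intersects the maximal sphere of $\mathcal{N}$, and $P$ has length (number of edges) at most $r$. Then $G(\mathcal{S})$ contains $K_{t,t}$ as a subgraph.
   Context: A sphere in $\mathbb{R}^d$ is the boundary of a closed ball of positive radius; for a sphere $S$, $B(S)$ is the closed ball with boundary $S$. For a collection $\mathcal{X}$ of spheres, $G(\mathcal{X})$ is the graph with vertex set $\mathcal{X}$ in which two spheres are adjacent iff they intersect. A sphere $S'$ contains a different sphere $S$ if $B(S)\subseteq B(S')$. A collection is nested if for any two of its spheres one contains the other. Within a nested collection, the minimal (resp. maximal) sphere is the one containing no other (resp. contained in no other) sphere of the collection. Subgraphs need not be induced. *)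

theory Defs
  imports "HOL-Analysis.Analysis"
begin

definition is_sphere :: "'a::euclidean_space set \<Rightarrow> bool" where
  "is_sphere X \<longleftrightarrow> (\<exists>c r. r > 0 \<and> X = sphere c r)"

definition ball_of :: "'a::euclidean_space set \<Rightarrow> 'a set" where
  "ball_of X = (SOME B. \<exists>c r. r > 0 \<and> X = sphere c r \<and> B = cball c r)"

definition sphere_contains :: "'a::euclidean_space set \<Rightarrow> 'a set \<Rightarrow> bool" where
  "sphere_contains S' S \<longleftrightarrow> S \<noteq> S' \<and> ball_of S \<subseteq> ball_of S'"

definition nested :: "'a::euclidean_space set set \<Rightarrow> bool" where
  "nested N \<longleftrightarrow> (\<forall>S\<in>N. \<forall>S'\<in>N. S \<noteq> S' \<longrightarrow> sphere_contains S S' \<or> sphere_contains S' S)"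

definition minimal_in :: "'a::euclidean_space set \<Rightarrow> 'a set set \<Rightarrow> bool" where
  "minimal_in M N \<longleftrightarrow> M \<in> N \<and> (\<forall>S\<in>N. \<not> sphere_contains M S)"

definition maximal_in :: "'a::euclidean_space set \<Rightarrow> 'a set set \<Rightarrow> bool" where
  "maximal_in M N \<longleftrightarrow> M \<in> N \<and> (\<forall>S\<in>N. \<not> sphere_contains S M)"

definition adj :: "'a set \<Rightarrow> 'a set \<Rightarrow> bool" where
  "adj S S' \<longleftrightarrow> S \<noteq> S' \<and> S \<inter> S' \<noteq> {}"

text \<open>A path in G(X), given as the nonempty list of its (distinct) vertices in order.
Its length (number of edges) is length p - 1.\<close>
definition is_path_in :: "'a set set \<Rightarrow> 'a set list \<Rightarrow> bool" where
  "is_path_in X p \<longleftrightarrow> p \<noteq> [] \<and> distinct p \<and> set p \<subseteq> X \<and>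
     (\<forall>i. Suc i < length p \<longrightarrow> adj (p ! i) (p ! Suc i))"

definition contains_Ktt :: "'a set set \<Rightarrow> nat \<Rightarrow> bool" where
  "contains_Ktt X t \<longleftrightarrow> (\<exists>A B. A \<subseteq> X \<and> B \<subseteq> X \<and> A \<inter> B = {} \<and> card A = t \<and> card B = t \<and>
     (\<forall>a\<in>A. \<forall>b\<in>B. adj a b))"

end

theory Submission
  imports Defs
begin


lemma interval_window:
  fixes H :: "nat set"
  assumes fin: "H \<subseteq> {..<m}" and conv: "\<And>a b j. a \<in> H \<Longrightarrow> b \<in> H \<Longrightarrow> a \<le> j \<Longrightarrow> j \<le> b \<Longrightarrow> j \<in> H"
    and c: "card H \<ge> t" and t: "t > 0"
  shows "\<exists>k0. k0 + t \<le> m \<and> {k0..<k0+t} \<subseteq> H"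
proof -
  have fH: "finite H" using fin finite_subset by blast
  have ne: "H \<noteq> {}" using c t by auto
  define a where "a = Min H"
  define b where "b = Max H"
  have aH: "a \<in> H" and bH: "b \<in> H" using fH ne a_def b_def by auto
  have "H \<subseteq> {a..b}" using fH a_def b_def by auto
  hence "card H \<le> card {a..b}" by (intro card_mono) simp_all
  hence "t \<le> b + 1 - a" using c by simp
  moreover have "b < m" using bH fin by auto
  moreover have "a \<le> b" using fH ne a_def b_def by simp
  ultimately have 1: "a + t \<le> m" by linarith
  have "{a..<a+t} \<subseteq> H"
  proof
    fix j assume "j \<in> {a..<a+t}"
    then show "j \<in> H" using conv[OF aH bH] \<open>t \<le> b + 1 - a\<close> \<open>a \<le> b\<close> by auto
  qed
  with 1 show ?thesis by blast
qed

lemma path_window: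
  fixes hit :: "'v \<Rightarrow> nat \<Rightarrow> bool" and p :: "'v list"
  assumes t: "t > 0" and m: "m = t*(r+1)"
    and cover: "\<forall>k<m. \<exists>v\<in>set p. hit v k"
    and conv: "\<forall>v\<in>set p. \<forall>a b j. hit v a \<longrightarrow> hit v b \<longrightarrow> a \<le> j \<longrightarrow> j \<le> b \<longrightarrow> hit v j"
    and len: "length p \<le> r+1"
  shows "\<exists>v\<in>set p. \<exists>k0. k0 + t \<le> m \<and> (\<forall>j\<in>{k0..<k0+t}. hit v j)"
proof (rule ccontr)
  assume na: "\<not> ?thesis"
  define H where "H v = {k. k < m \<and> hit v k}" for v
  have small: "card (H v) \<le> t - 1" if v: "v \<in> set p" for v
  proof (rule ccontr)
    assume "\<not> card (H v) \<le> t - 1"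
    hence c: "card (H v) \<ge> t" by simp
    have s: "H v \<subseteq> {..<m}" by (auto simp: H_def)
    have cv: "j \<in> H v" if "a \<in> H v" "b \<in> H v" "a \<le> j" "j \<le> b" for a b j
    proof -
      have "hit v a" "hit v b" "b < m" using that by (simp_all add: H_def)
      moreover have "hit v j" using conv v \<open>hit v a\<close> \<open>hit v b\<close> that(3,4) by blast
      ultimately show ?thesis using that(4) by (simp add: H_def)
    qed
    have "\<exists>k0. k0 + t \<le> m \<and> {k0..<k0+t} \<subseteq> H v"
      apply (rule interval_window[OF s _ c t])
      by (rule cv)
    then obtain k0 where k0: "k0 + t \<le> m" "{k0..<k0+t} \<subseteq> H v" by blast
    have "\<forall>j\<in>{k0..<k0+t}. hit v j"
    proof
      fix j assume "j \<in> {k0..<k0+t}"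
      then have "j \<in> H v" using k0(2) by blast
      then show "hit v j" by (simp add: H_def)
    qed
    then show False using na v k0(1) by blast
  qed
  have "{..<m} \<subseteq> (\<Union>v\<in>set p. H v)" unfolding H_def using cover by blast
  moreover have "finite (\<Union>v\<in>set p. H v)" unfolding H_def by simp
  ultimately have "card {..<m} \<le> card (\<Union>v\<in>set p. H v)" by (intro card_mono)
  hence "m \<le> card (\<Union>v\<in>set p. H v)" by simp
  also have "\<dots> \<le> (\<Sum>v\<in>set p. card (H v))" by (rule card_UN_le) simp
  also have "\<dots> \<le> card (set p) * (t - 1)" using small sum_bounded_above[of "set p" "\<lambda>v. card (H v)" "t-1"] by simp
  also have "\<dots> \<le> (r+1) * (t-1)" using len card_length[of p] by (intro mult_right_mono) simp_all
  also have "\<dots> < (r+1) * t" using t by (intro mult_strict_left_mono) simp_all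
  also have "\<dots> = m" using m by simp
  finally show False by simp
qed


lemma arith_aux:
  fixes t r :: nat assumes "t > 0"
  shows "(t*r + 1) * (t - 1) < t^2 * (r+1)"
proof -
  have "(t*r + 1) * (t - 1) < (t*r+1) * t" using assms by (intro mult_strict_left_mono) simp_all
  also have "\<dots> = t*t*r + t" by (simp add: algebra_simps)
  also have "\<dots> \<le> t*t*r + t*t" using assms by simp
  also have "\<dots> = t^2 * (r+1)" by (simp add: algebra_simps power2_eq_square)
  finally show ?thesis .
qed

lemma comb:
  fixes hit :: "'v \<Rightarrow> nat \<Rightarrow> bool" and P :: "nat \<Rightarrow> 'v list"
  assumes t: "t > 0" and m: "m = t*(r+1)" and n: "n = t^2*(r+1)"
    and cover: "\<forall>i<n. \<forall>k<m. \<exists>v\<in>set (P i). hit v k"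
    and conv: "\<forall>i<n. \<forall>v\<in>set (P i). \<forall>a b j. hit v a \<longrightarrow> hit v b \<longrightarrow> a \<le> j \<longrightarrow> j \<le> b \<longrightarrow> hit v j"
    and len: "\<forall>i<n. length (P i) \<le> r+1"
  shows "\<exists>I k0. I \<subseteq> {..<n} \<and> card I = t \<and> k0 + t \<le> m \<and>
            (\<forall>i\<in>I. \<exists>v\<in>set (P i). \<forall>j\<in>{k0..<k0+t}. hit v j)"
proof -
  define Q where "Q i k0 \<longleftrightarrow> k0 + t \<le> m \<and> (\<exists>v\<in>set (P i). \<forall>j\<in>{k0..<k0+t}. hit v j)" for i k0
  define f where "f i = (SOME k0. Q i k0)" for i
  have Qf: "Q i (f i)" if "i < n" for i
  proof -
    have "\<exists>v\<in>set (P i). \<exists>k0. k0 + t \<le> m \<and> (\<forall>j\<in>{k0..<k0+t}. hit v j)"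
      
    proof (rule path_window[OF t m])
      show "\<forall>k<m. \<exists>v\<in>set (P i). hit v k" using cover that by blast
      show "\<forall>v\<in>set (P i). \<forall>a b j. hit v a \<longrightarrow> hit v b \<longrightarrow> a \<le> j \<longrightarrow> j \<le> b \<longrightarrow> hit v j"
        using conv that by blast
      show "length (P i) \<le> r + 1" using len that by blast
    qed
    hence "\<exists>k0. Q i k0" unfolding Q_def by blast
    thus ?thesis unfolding f_def by (rule someI_ex)
  qed
  define F where "F k = {i. i < n \<and> f i = k}" for k
  have "\<exists>k\<in>{..m-t}. t \<le> card (F k)"
  proof (rule ccontr)
    assume nk: "\<not> (\<exists>k\<in>{..m-t}. t \<le> card (F k))"
    have sm: "\<forall>k\<in>{..m-t}. card (F k) \<le> t - 1"
    proof
      fix k assume "k \<in> {..m-t}"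
      with nk have "card (F k) < t" by (meson not_le)
      thus "card (F k) \<le> t - 1" by simp
    qed
    have "{..<n} \<subseteq> (\<Union>k\<in>{..m-t}. F k)"
    proof
      fix i assume "i \<in> {..<n}"
      hence "i < n" by simp
      hence "f i + t \<le> m" using Qf unfolding Q_def by blast
      hence "f i \<in> {..m-t}" by simp
      thus "i \<in> (\<Union>k\<in>{..m-t}. F k)" using \<open>i < n\<close> unfolding F_def by blast
    qed
    moreover have "finite (\<Union>k\<in>{..m-t}. F k)" unfolding F_def by simp
    ultimately have "card {..<n} \<le> card (\<Union>k\<in>{..m-t}. F k)" by (intro card_mono)
    hence "n \<le> card (\<Union>k\<in>{..m-t}. F k)" by simp
    also have "\<dots> \<le> (\<Sum>k\<in>{..m-t}. card (F k))" by (rule card_UN_le) simp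
    also have "\<dots> \<le> card {..m-t} * (t - 1)" using sm sum_bounded_above[of "{..m-t}" "\<lambda>k. card (F k)" "t-1"] by simp
    also have "m - t = t*r" using m by simp
    hence "card {..m-t} = t*r + 1" by simp
    finally have "n \<le> (t*r+1)*(t-1)" .
    then show False using arith_aux[OF t, of r] n by simp
  qed
  then obtain k where k: "k \<le> m - t" "t \<le> card (F k)" by auto
  then obtain I where I: "I \<subseteq> F k" "card I = t" using obtain_subset_with_card_n by metis
  have "I \<subseteq> {..<n}" using I(1) unfolding F_def by auto
  moreover have "k + t \<le> m" proof -
    have "t \<le> m" using m by simp
    thus ?thesis using k(1) by linarith
  qed
  moreover have "\<forall>i\<in>I. \<exists>v\<in>set (P i). \<forall>j\<in>{k..<k+t}. hit v j"
  proof
    fix i assume "i \<in> I"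
    hence "i < n" "f i = k" using I(1) unfolding F_def by auto
    thus "\<exists>v\<in>set (P i). \<forall>j\<in>{k..<k+t}. hit v j" using Qf unfolding Q_def by blast
  qed
  ultimately show ?thesis using I(2) by blast
qed



lemma sph_rep:
  assumes "is_sphere S"
  shows "\<exists>c r. r > 0 \<and> S = sphere c r \<and> ball_of S = cball c r"
proof -
  obtain c r where cr: "r > 0" "S = sphere c r" using assms unfolding is_sphere_def by blast
  hence "\<exists>B. \<exists>c r. r > 0 \<and> S = sphere c r \<and> B = cball c r" by blast
  hence "\<exists>c r. r > 0 \<and> S = sphere c r \<and> ball_of S = cball c r"
    unfolding ball_of_def by (rule someI_ex)
  thus ?thesis .
qed

lemma sph_props:
  assumes "is_sphere S"
  shows "closed (ball_of S)" "bounded (ball_of S)" "frontier (ball_of S) = S" "S \<subseteq> ball_of S"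
proof -
  obtain c r where cr: "r > 0" "S = sphere c r" "ball_of S = cball c r" using sph_rep[OF assms] by blast
  show "closed (ball_of S)" "bounded (ball_of S)" "frontier (ball_of S) = S" "S \<subseteq> ball_of S"
    using cr by (auto simp: frontier_cball)
qed

lemma sph_conn:
  assumes "is_sphere (S::'a::euclidean_space set)" "DIM('a) \<ge> 2"
  shows "connected S"
  using sph_rep[OF assms(1)] connected_sphere[OF assms(2)] by blast

lemma cross:
  assumes "closed K" "connected C" "y \<in> C" "y \<in> K" "x \<in> C" "x \<notin> interior K"
  shows "C \<inter> frontier K \<noteq> {}"
proof (cases "y \<in> frontier K")
  case True thus ?thesis using assms by blast
next
  case False
  hence "y \<in> interior K" using assms(1,4) by (simp add: frontier_def closure_closed)
  hence "C \<inter> frontier (interior K) \<noteq> {}"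
    using assms by (intro connected_Int_frontier) auto
  thus ?thesis using frontier_interior_subset by blast
qed

lemma not_interior:
  assumes "is_sphere S" "is_sphere S'" "ball_of S \<subseteq> ball_of S'" "x \<in> S'"
  shows "x \<notin> interior (ball_of S)"
proof
  assume "x \<in> interior (ball_of S)"
  hence "x \<in> interior (ball_of S')" using assms(3) interior_mono by blast
  moreover have "x \<in> frontier (ball_of S')" using sph_props(3)[OF assms(2)] assms(4) by simp
  ultimately show False by (simp add: frontier_def)
qed

lemma diam_inj:
  assumes "is_sphere S" "is_sphere S'" "ball_of S \<subseteq> ball_of S'"
    "diameter (ball_of S) = diameter (ball_of S')"
  shows "S = S'"
proof -
  obtain c r where cr: "r > 0" "S = sphere c r" "ball_of S = cball c r" using sph_rep[OF assms(1)] by blast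
  obtain c' r' where cr': "r' > 0" "S' = sphere c' r'" "ball_of S' = cball c' r'" using sph_rep[OF assms(2)] by blast
  have "r = r'" using assms(4) cr cr' by (simp add: diameter_cball)
  moreover have "cball c r \<subseteq> cball c' r'" using assms(3) cr cr' by simp
  hence "dist c c' + r \<le> r'" using cball_subset_cball_iff[of c r c' r'] cr(1) by linarith
  ultimately have "c = c'" by simp
  thus ?thesis using cr cr' \<open>r = r'\<close> by simp
qed

lemma chain_connected:
  "(\<forall>x\<in>set p. connected x) \<Longrightarrow> (\<forall>i. Suc i < length p \<longrightarrow> p!i \<inter> p!Suc i \<noteq> {}) \<Longrightarrow> connected (\<Union>(set p))"
proof (induction p)
  case Nil thus ?case by simp
next
  case (Cons a q)
  show ?case
  proof (cases "q = []")
    case True thus ?thesis using Cons.prems by simp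
  next
    case False
    have "\<forall>i. Suc i < length q \<longrightarrow> q!i \<inter> q!Suc i \<noteq> {}"
    proof (intro allI impI)
      fix i assume "Suc i < length q"
      hence "Suc (Suc i) < length (a#q)" by simp
      thus "q!i \<inter> q!Suc i \<noteq> {}" using Cons.prems(2) by (metis nth_Cons_Suc)
    qed
    hence cq: "connected (\<Union>(set q))" using Cons by simp
    have "Suc 0 < length (a#q)" using False by simp
    hence "(a#q)!0 \<inter> (a#q)!Suc 0 \<noteq> {}" using Cons.prems(2) by blast
    hence "a \<inter> hd q \<noteq> {}" using False by (simp add: hd_conv_nth)
    moreover have "hd q \<in> set q" using False by simp
    ultimately have "a \<inter> \<Union>(set q) \<noteq> {}" by blast
    moreover have "connected a" using Cons.prems(1) by simp
    ultimately have "connected (a \<union> \<Union>(set q))" using cq connected_Un by blast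
    thus ?thesis by simp
  qed
qed



theorem lemma4p1:
  fixes SS NN :: "'a::euclidean_space set set"
    and r t :: nat
    and P :: "nat \<Rightarrow> 'a set list"
    and Nmin Nmax :: "'a set"
  assumes "DIM('a) \<ge> 2"
    and "r > 0" and "t > 0"
    and "finite SS" and "\<forall>X\<in>SS. is_sphere X"
    and "NN \<subseteq> SS" and "nested NN" and "card NN = t * (r + 1)"
    and "minimal_in Nmin NN" and "maximal_in Nmax NN"
    and "\<forall>i < t^2 * (r + 1). is_path_in (SS - NN) (P i)"
    and "\<forall>i < t^2 * (r + 1). \<forall>j < t^2 * (r + 1). i \<noteq> j \<longrightarrow> set (P i) \<inter> set (P j) = {}"
    and "\<forall>i < t^2 * (r + 1). hd (P i) \<inter> Nmin \<noteq> {} \<and> last (P i) \<inter> Nmax \<noteq> {}"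
    and "\<forall>i < t^2 * (r + 1). length (P i) - 1 \<le> r"
  shows "contains_Ktt SS t"
proof -
  note dim = assms(1) and tpos = assms(3)
  define m where "m = t * (r+1)"
  define n where "n = t^2 * (r+1)"
  have paths: "\<And>i. i < n \<Longrightarrow> is_path_in (SS - NN) (P i)" using assms(11) n_def by blast
  have disj: "\<And>i j. i < n \<Longrightarrow> j < n \<Longrightarrow> i \<noteq> j \<Longrightarrow> set (P i) \<inter> set (P j) = {}" using assms(12) n_def by blast
  have ends: "\<And>i. i < n \<Longrightarrow> hd (P i) \<inter> Nmin \<noteq> {} \<and> last (P i) \<inter> Nmax \<noteq> {}" using assms(13) n_def by blast
  have lens: "\<And>i. i < n \<Longrightarrow> length (P i) - 1 \<le> r" using assms(14) n_def by blast
  have sphN: "\<And>S. S \<in> NN \<Longrightarrow> is_sphere S" using assms(5,6) by blast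
  have sphS: "\<And>S. S \<in> SS \<Longrightarrow> is_sphere S" using assms(5) by blast
  have finN: "finite NN" using assms(4,6) finite_subset by blast
  define Bl where "Bl = (ball_of :: 'a set \<Rightarrow> 'a set)"
  define \<rho> where "\<rho> S = diameter (Bl S)" for S
  have nest: "\<And>S S'. S \<in> NN \<Longrightarrow> S' \<in> NN \<Longrightarrow> Bl S \<subseteq> Bl S' \<or> Bl S' \<subseteq> Bl S"
  proof -
    fix S S' assume h: "S \<in> NN" "S' \<in> NN"
    show "Bl S \<subseteq> Bl S' \<or> Bl S' \<subseteq> Bl S"
    proof (cases "S = S'")
      case True thus ?thesis by simp
    next
      case False
      hence "sphere_contains S S' \<or> sphere_contains S' S" using assms(7) h unfolding nested_def by blast
      thus ?thesis unfolding sphere_contains_def Bl_def by blast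
    qed
  qed
  have mono: "\<And>S S'. S \<in> NN \<Longrightarrow> S' \<in> NN \<Longrightarrow> Bl S \<subseteq> Bl S' \<Longrightarrow> \<rho> S \<le> \<rho> S'"
  proof -
    fix S S' assume h: "S \<in> NN" "S' \<in> NN" "Bl S \<subseteq> Bl S'"
    have "bounded (ball_of S')" by (rule sph_props(2)[OF sphN[OF h(2)]])
    thus "\<rho> S \<le> \<rho> S'" unfolding \<rho>_def using h(3) diameter_subset unfolding Bl_def by blast
  qed
  have inj: "inj_on \<rho> NN"
  proof (rule inj_onI)
    fix S S' assume h: "S \<in> NN" "S' \<in> NN" "\<rho> S = \<rho> S'"
    show "S = S'"
    proof (cases "Bl S \<subseteq> Bl S'")
      case True
      hence "ball_of S \<subseteq> ball_of S'" "diameter (ball_of S) = diameter (ball_of S')"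
        using h(3) unfolding \<rho>_def Bl_def by auto
      from diam_inj[OF sphN[OF h(1)] sphN[OF h(2)] this] show ?thesis .
    next
      case False
      hence "Bl S' \<subseteq> Bl S" using nest h by blast
      hence "ball_of S' \<subseteq> ball_of S" "diameter (ball_of S') = diameter (ball_of S)"
        using h(3) unfolding \<rho>_def Bl_def by auto
      from diam_inj[OF sphN[OF h(2)] sphN[OF h(1)] this] show ?thesis by simp
    qed
  qed
  have ord: "\<And>S S'. S \<in> NN \<Longrightarrow> S' \<in> NN \<Longrightarrow> \<rho> S < \<rho> S' \<Longrightarrow> Bl S \<subseteq> Bl S'"
  proof -
    fix S S' assume h: "S \<in> NN" "S' \<in> NN" "\<rho> S < \<rho> S'"
    show "Bl S \<subseteq> Bl S'"
    proof (rule ccontr)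
      assume "\<not> Bl S \<subseteq> Bl S'"
      hence "Bl S' \<subseteq> Bl S" using nest h by blast
      hence "\<rho> S' \<le> \<rho> S" using mono h by blast
      thus False using h by simp
    qed
  qed
  define rs where "rs = sorted_list_of_set (\<rho> ` NN)"
  have lenrs: "length rs = m" unfolding rs_def m_def using assms(8) card_image[OF inj] by simp
  have setrs: "set rs = \<rho> ` NN" unfolding rs_def using finN by simp
  have srt: "sorted_wrt (<) rs" unfolding rs_def by (rule strict_sorted_list_of_set)
  define e where "e k = inv_into NN \<rho> (rs ! k)" for k
  have eN: "\<And>k. k < m \<Longrightarrow> e k \<in> NN"
    unfolding e_def using lenrs setrs by (metis inv_into_into nth_mem)
  have er: "\<And>k. k < m \<Longrightarrow> \<rho> (e k) = rs ! k"
    unfolding e_def using lenrs setrs by (metis f_inv_into_f nth_mem)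
  have emono: "\<And>k j. k \<le> j \<Longrightarrow> j < m \<Longrightarrow> Bl (e k) \<subseteq> Bl (e j)"
  proof -
    fix k j assume kj: "k \<le> j" "j < m"
    show "Bl (e k) \<subseteq> Bl (e j)"
    proof (cases "k = j")
      case True thus ?thesis by simp
    next
      case False
      hence "rs ! k < rs ! j" using sorted_wrt_nth_less[OF srt] kj lenrs by simp
      thus ?thesis using ord eN er kj by simp
    qed
  qed
  have einj: "inj_on e {..<m}"
  proof (rule inj_onI)
    fix k j assume "k \<in> {..<m}" "j \<in> {..<m}" "e k = e j"
    hence "rs ! k = rs ! j" using er by (metis lessThan_iff)
    thus "k = j" using distinct_sorted_list_of_set \<open>k \<in> {..<m}\<close> \<open>j \<in> {..<m}\<close> lenrs
      unfolding rs_def by (simp add: nth_eq_iff_index_eq)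
  qed
  have minN: "Nmin \<in> NN" and maxN: "Nmax \<in> NN"
    using assms(9,10) unfolding minimal_in_def maximal_in_def by auto
  have minB: "\<And>S. S \<in> NN \<Longrightarrow> Bl Nmin \<subseteq> Bl S"
  proof -
    fix S assume h: "S \<in> NN"
    show "Bl Nmin \<subseteq> Bl S"
    proof (cases "S = Nmin")
      case True thus ?thesis by simp
    next
      case False
      hence "\<not> sphere_contains Nmin S" using assms(9) h unfolding minimal_in_def by blast
      hence "Bl Nmin \<subseteq> Bl S \<or> Bl S \<subseteq> Bl Nmin \<and> False \<or> Bl Nmin \<subseteq> Bl S"
        using nest[OF h minN] False unfolding sphere_contains_def Bl_def by blast
      thus ?thesis by blast
    qed
  qed
  have maxB: "\<And>S. S \<in> NN \<Longrightarrow> Bl S \<subseteq> Bl Nmax"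
  proof -
    fix S assume h: "S \<in> NN"
    show "Bl S \<subseteq> Bl Nmax"
    proof (cases "S = Nmax")
      case True thus ?thesis by simp
    next
      case False
      hence "\<not> sphere_contains S Nmax" using assms(10) h unfolding maximal_in_def by blast
      thus ?thesis using nest[OF h maxN] False unfolding sphere_contains_def Bl_def by blast
    qed
  qed
  define hit where "hit v k \<longleftrightarrow> k < m \<and> v \<inter> e k \<noteq> {}" for v :: "'a set" and k
  have frE: "\<And>k. k < m \<Longrightarrow> frontier (Bl (e k)) = e k"
    unfolding Bl_def by (simp add: sph_props(3)[OF sphN[OF eN]])
  have clE: "\<And>k. k < m \<Longrightarrow> closed (Bl (e k))"
    unfolding Bl_def by (simp add: sph_props(1)[OF sphN[OF eN]])
  have inB: "\<And>S. S \<in> NN \<Longrightarrow> S \<subseteq> Bl S"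
    unfolding Bl_def by (simp add: sph_props(4)[OF sphN])
  have cover: "\<forall>i<n. \<forall>k<m. \<exists>v\<in>set (P i). hit v k"
  proof (intro allI impI)
    fix i k assume i: "i < n" and k: "k < m"
    have pp: "is_path_in (SS - NN) (P i)" using paths i .
    hence ne: "P i \<noteq> []" and sub: "set (P i) \<subseteq> SS - NN" unfolding is_path_in_def by auto
    obtain y where y: "y \<in> hd (P i)" "y \<in> Nmin" using ends[OF i] by blast
    obtain x where x: "x \<in> last (P i)" "x \<in> Nmax" using ends[OF i] by blast
    define C where "C = \<Union>(set (P i))"
    have cC: "connected C" unfolding C_def
    proof (rule chain_connected)
      show "\<forall>x\<in>set (P i). connected x"
      proof
        fix x assume "x \<in> set (P i)"
        then have "x \<in> SS" using sub by blast
        thus "connected x" using sph_conn[OF sphS dim] by simp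
      qed
      show "\<forall>j. Suc j < length (P i) \<longrightarrow> P i ! j \<inter> P i ! Suc j \<noteq> {}"
        using pp unfolding is_path_in_def adj_def by simp
    qed
    moreover have yC: "y \<in> C" unfolding C_def using y(1) hd_in_set[OF ne] by blast
    moreover have xC: "x \<in> C" unfolding C_def using x(1) last_in_set[OF ne] by blast
    moreover have yB: "y \<in> Bl (e k)" using y(2) inB[OF minN] minB[OF eN[OF k]] by blast
    moreover have xB: "x \<notin> interior (Bl (e k))"
    proof -
      have "ball_of (e k) \<subseteq> ball_of Nmax" using maxB[OF eN[OF k]] unfolding Bl_def .
      from not_interior[OF sphN[OF eN[OF k]] sphN[OF maxN] this x(2)] show ?thesis unfolding Bl_def .
    qed
    have "C \<inter> frontier (Bl (e k)) \<noteq> {}" by (rule cross[OF clE[OF k] cC yC yB xC xB])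
    thus "\<exists>v\<in>set (P i). hit v k" unfolding C_def hit_def using frE[OF k] k by blast
  qed
  have conv: "\<forall>i<n. \<forall>v\<in>set (P i). \<forall>a b j. hit v a \<longrightarrow> hit v b \<longrightarrow> a \<le> j \<longrightarrow> j \<le> b \<longrightarrow> hit v j"
  proof (intro allI impI ballI)
    fix i v a b j assume i: "i < n" and v: "v \<in> set (P i)" and ha: "hit v a" and hb: "hit v b"
      and aj: "a \<le> j" and jb: "j \<le> b"
    have "v \<in> SS" using paths[OF i] v unfolding is_path_in_def by blast
    hence sv: "is_sphere v" using sphS by blast
    have bm: "b < m" "a < m" using ha hb unfolding hit_def by auto
    hence jm: "j < m" using jb by simp
    obtain y where y: "y \<in> v" "y \<in> e a" using ha unfolding hit_def by blast
    obtain x where x: "x \<in> v" "x \<in> e b" using hb unfolding hit_def by blast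
    have yB: "y \<in> Bl (e j)" using y(2) inB[OF eN[OF bm(2)]] emono[OF aj jm] by blast
    have xB: "x \<notin> interior (Bl (e j))"
    proof -
      have "ball_of (e j) \<subseteq> ball_of (e b)" using emono[OF jb bm(1)] unfolding Bl_def .
      from not_interior[OF sphN[OF eN[OF jm]] sphN[OF eN[OF bm(1)]] this x(2)] show ?thesis unfolding Bl_def .
    qed
    have "v \<inter> frontier (Bl (e j)) \<noteq> {}"
      by (rule cross[OF clE[OF jm] sph_conn[OF sv dim] y(1) yB x(1) xB])
    thus "hit v j" unfolding hit_def using frE[OF jm] jm by simp
  qed
  have len: "\<forall>i<n. length (P i) \<le> r+1" using lens by fastforce
  obtain I k0 where I: "I \<subseteq> {..<n}" "card I = t" "k0 + t \<le> m"
      "\<forall>i\<in>I. \<exists>v\<in>set (P i). \<forall>j\<in>{k0..<k0+t}. hit v j"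
    using comb[OF tpos m_def n_def cover conv len] by blast
  define g where "g i = (SOME v. v \<in> set (P i) \<and> (\<forall>j\<in>{k0..<k0+t}. hit v j))" for i
  have g: "\<And>i. i \<in> I \<Longrightarrow> g i \<in> set (P i) \<and> (\<forall>j\<in>{k0..<k0+t}. hit (g i) j)"
  proof -
    fix i assume "i \<in> I"
    hence "\<exists>v. v \<in> set (P i) \<and> (\<forall>j\<in>{k0..<k0+t}. hit v j)" using I(4) by blast
    thus "g i \<in> set (P i) \<and> (\<forall>j\<in>{k0..<k0+t}. hit (g i) j)" unfolding g_def by (rule someI_ex)
  qed
  define A where "A = g ` I"
  define B where "B = e ` {k0..<k0+t}"
  have ginj: "inj_on g I"
  proof (rule inj_onI)
    fix i i' assume h: "i \<in> I" "i' \<in> I" "g i = g i'"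
    show "i = i'"
    proof (rule ccontr)
      assume "i \<noteq> i'"
      hence "set (P i) \<inter> set (P i') = {}" using disj I(1) h by blast
      thus False using g h by (metis disjoint_iff)
    qed
  qed
  have AS: "A \<subseteq> SS - NN"
  proof
    fix a assume "a \<in> A"
    then obtain i where i: "i \<in> I" "a = g i" unfolding A_def by blast
    have "i < n" using I(1) i(1) by blast
    hence "set (P i) \<subseteq> SS - NN" using paths unfolding is_path_in_def by blast
    thus "a \<in> SS - NN" using g[OF i(1)] i(2) by blast
  qed
  have BN: "B \<subseteq> NN" unfolding B_def using eN I(3) by auto
  have cA: "card A = t" unfolding A_def using card_image[OF ginj] I(2) by simp
  have "{k0..<k0+t} \<subseteq> {..<m}" using I(3) by auto
  hence "inj_on e {k0..<k0+t}" using einj inj_on_subset by blast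
  hence cB: "card B = t" unfolding B_def using card_image by fastforce
  have adjAB: "\<forall>a\<in>A. \<forall>b\<in>B. adj a b"
  proof (intro ballI)
    fix a b assume a: "a \<in> A" and b: "b \<in> B"
    obtain i where i: "i \<in> I" "a = g i" using a A_def by blast
    obtain j where j: "j \<in> {k0..<k0+t}" "b = e j" using b B_def by blast
    have "hit a j" using g[OF i(1)] i(2) j(1) by blast
    hence "a \<inter> b \<noteq> {}" using j(2) unfolding hit_def by simp
    moreover have "a \<noteq> b" using AS BN a b by blast
    ultimately show "adj a b" unfolding adj_def by simp
  qed
  have "A \<subseteq> SS" "B \<subseteq> SS" "A \<inter> B = {}" using AS BN assms(6) by blast+
  thus ?thesis unfolding contains_Ktt_def using cA cB adjAB by blast
qed

thm_deps lemma4p1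

end
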